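(* For any values of $k$, $\mu$, and $\nu$, \[ \,_{3}F_{4}\left(\tfrac{1}{2},\tfrac{\mu}{2}+\tfrac{\nu}{2}+\tfrac{1}{2},\tfrac{\mu}{2}+\tfrac{\nu}{2}+1;1,\mu+1,\nu+1,\mu+\nu+1;-k^{2}\right) = 2^{\mu+\nu}\Gamma(\mu+1)\Gamma(\nu+1)\sum_{L=0}^{\infty}\frac{(-1)^{2L}k^{4L}2^{-8L-\mu-\nu}\left(2-\delta_{L0}\right)}{(L!)^{2}\Gamma(L+\mu+1)\Gamma(L+\nu+1)} \,_{1}F_{2}\left(L+\tfrac{1}{2};2L+1,L+\mu+1;-\tfrac{k^{2}}{4}\right)\,_{1}F_{2}\left(L+\tfrac{1}{2};2L+1,L+\nu+1;-\tfrac{k^{2}}{4}\right). \]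
   Context: $\,_{p}F_{q}(a_1,\dots,a_p;b_1,\dots,b_q;z)=\sum_{n\ge0}\frac{(a_1)_n\cdots(a_p)_n}{(b_1)_n\cdots(b_q)_n}\frac{z^n}{n!}$ is the generalized hypergeometric function, with $(c)_n=\Gamma(c+n)/\Gamma(c)$ the Pochhammer symbol. $\delta_{L0}$ is the Kronecker delta (equal to $1$ if $L=0$ and $0$ otherwise). *)

theory Defs
  imports "HOL-Analysis.Analysis"
begin

definition hypergeom :: "complex list \<Rightarrow> complex list \<Rightarrow> complex \<Rightarrow> complex" where
  "hypergeom as bs z =
     (\<Sum>n. (\<Prod>a\<leftarrow>as. pochhammer a n) / (\<Prod>b\<leftarrow>bs. pochhammer b n) * z ^ n / fact n)"

definition kdelta :: "nat \<Rightarrow> nat \<Rightarrow> complex" where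
  "kdelta i j = (if i = j then 1 else 0)"

end

theory Submission imports Defs begin

lemma poch_half: "pochhammer (1/2 :: complex) n = fact (2*n) / (4^n * fact n)"
proof -
  have "pochhammer (2 * (1/2::complex)) (2*n) = of_nat (2^(2*n)) * pochhammer (1/2) n * pochhammer (1/2+1/2) n"
    by (rule pochhammer_double)
  hence "fact (2*n) = (4::complex)^n * pochhammer (1/2) n * fact n"
    by (simp add: pochhammer_fact power_mult)
  thus ?thesis by (simp add: field_simps)
qed

lemma poch_Lhalf:
  "pochhammer (of_nat L + 1/2 :: complex) i / pochhammer (2 * of_nat L + 1) i
     = of_nat ((2*(L+i)) choose (2*L+i)) * fact L * fact i / (4^i * fact (L+i))"
proof -
  have a: "pochhammer (1/2 :: complex) (L+i) = pochhammer (1/2) L * pochhammer (of_nat L + 1/2) i"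
    by (simp add: pochhammer_product' add.commute)
  have b: "fact (2*L+i) = (fact (2*L) :: complex) * pochhammer (2 * of_nat L + 1) i"
    using pochhammer_product'[of "1::complex" "2*L" i] by (simp add: pochhammer_fact add.commute)
  have c: "(of_nat ((2*(L+i)) choose (2*L+i)) :: complex) = fact (2*(L+i)) / (fact (2*L+i) * fact i)"
    by (subst binomial_fact) (auto simp: algebra_simps)
  have nz: "pochhammer (1/2 :: complex) L \<noteq> 0" "pochhammer (2 * of_nat L + 1 :: complex) i \<noteq> 0"
  proof -
    show "pochhammer (1/2 :: complex) L \<noteq> 0" by (simp add: poch_half)
    have "2 * (of_nat L :: complex) + 1 \<noteq> - of_nat k" for k
    proof
      assume "2 * (of_nat L :: complex) + 1 = - of_nat k"
      hence "(of_nat (2*L+1+k) :: complex) = 0" by (simp add: algebra_simps) (metis add.commute add.left_commute add.right_inverse)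
      thus False by (simp only: of_nat_eq_0_iff)
    qed
    thus "pochhammer (2 * of_nat L + 1 :: complex) i \<noteq> 0" by (simp add: pochhammer_eq_0_iff)
  qed
  have "pochhammer (of_nat L + 1/2 :: complex) i = pochhammer (1/2 :: complex) (L+i) / pochhammer (1/2) L"
    using a nz by simp
  also have "\<dots> = fact (2*(L+i)) * fact L / (4^i * fact (L+i) * fact (2*L))"
    by (simp add: poch_half field_simps power_add)
  finally show ?thesis using nz b unfolding c by (simp add: field_simps)
qed

definition tm :: "complex \<Rightarrow> complex \<Rightarrow> nat \<Rightarrow> nat \<Rightarrow> complex" where
  "tm \<mu> w L i = pochhammer (of_nat L + 1/2) i / (pochhammer (2 * of_nat L + 1) i * pochhammer (of_nat L + \<mu> + 1) i) * (- w / 4) ^ i / fact i"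

definition Rc :: "complex \<Rightarrow> complex \<Rightarrow> complex \<Rightarrow> nat \<Rightarrow> complex" where
  "Rc \<mu> \<nu> w L = (2 - kdelta L 0) * w^(2*L) / (2^(8*L) * (fact L)^2 * pochhammer (\<mu>+1) L * pochhammer (\<nu>+1) L)"

definition TT :: "complex \<Rightarrow> complex \<Rightarrow> complex \<Rightarrow> nat \<times> nat \<times> nat \<Rightarrow> complex" where
  "TT \<mu> \<nu> w p = (case p of (L,i,j) \<Rightarrow> Rc \<mu> \<nu> w L * tm \<mu> w L i * tm \<nu> w L j)"

definition cf :: "complex \<Rightarrow> complex \<Rightarrow> complex \<Rightarrow> nat \<times> nat \<times> nat \<Rightarrow> complex" where
  "cf \<mu> \<nu> w p = (case p of (L,i,j) \<Rightarrow> (-w)^(2*L+i+j) / 16^(2*L+i+j) * (2 - kdelta L 0)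
     * of_nat ((2*(L+i)) choose (2*L+i)) * of_nat ((2*(L+j)) choose (2*L+j))
     / (fact (L+i) * fact (L+j) * pochhammer (\<mu>+1) (L+i) * pochhammer (\<nu>+1) (L+j)))"

lemma poch_nz:
  fixes c :: complex assumes "c \<notin> \<int>\<^sub>\<le>\<^sub>0" shows "pochhammer c n \<noteq> 0"
  using assms by (auto simp: pochhammer_eq_0_iff)

lemma tm_eq:
  assumes "\<mu> + 1 \<notin> \<int>\<^sub>\<le>\<^sub>0"
  shows "tm \<mu> w L i = of_nat ((2*(L+i)) choose (2*L+i)) * fact L * pochhammer (\<mu>+1) L * (-w)^i
      / (16^i * fact (L+i) * pochhammer (\<mu>+1) (L+i))"
proof -
  have p: "pochhammer (\<mu>+1) (L+i) = pochhammer (\<mu>+1) L * pochhammer (of_nat L + \<mu> + 1) i"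
    by (simp add: pochhammer_product' add_ac)
  have nz: "pochhammer (\<mu>+1) (L+i) \<noteq> 0" "pochhammer (\<mu>+1) L \<noteq> 0"
    using poch_nz[OF assms] by auto
  have "tm \<mu> w L i = (pochhammer (of_nat L + 1/2) i / pochhammer (2 * of_nat L + 1) i)
      / pochhammer (of_nat L + \<mu> + 1) i * (- w / 4) ^ i / fact i"
    unfolding tm_def by (simp add: field_simps)
  also have "\<dots> = of_nat ((2*(L+i)) choose (2*L+i)) * fact L * fact i / (4^i * fact (L+i))
      / pochhammer (of_nat L + \<mu> + 1) i * (- w / 4) ^ i / fact i"
    by (simp only: poch_Lhalf)
  also have "\<dots> = of_nat ((2*(L+i)) choose (2*L+i)) * fact L * pochhammer (\<mu>+1) L * (-w)^i
      / (16^i * fact (L+i) * pochhammer (\<mu>+1) (L+i))"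
  proof -
    have q: "(- w / 4)^i = (-w)^i / 4^i" by (metis minus_divide_left power_divide)
    have r: "(16::complex)^i = 4^i * 4^i" by (simp flip: power_mult_distrib)
    show ?thesis using nz unfolding p q r by (simp add: field_simps)
  qed
  finally show ?thesis .
qed

lemma TT_eq:
  assumes "\<mu> + 1 \<notin> \<int>\<^sub>\<le>\<^sub>0" "\<nu> + 1 \<notin> \<int>\<^sub>\<le>\<^sub>0"
  shows "TT \<mu> \<nu> w (L,i,j) = cf \<mu> \<nu> w (L,i,j)"
proof -
  have nz: "pochhammer (\<mu>+1) L \<noteq> 0" "pochhammer (\<nu>+1) L \<noteq> 0"
     "pochhammer (\<mu>+1) (L+i) \<noteq> 0" "pochhammer (\<nu>+1) (L+j) \<noteq> 0"
    using poch_nz[OF assms(1)] poch_nz[OF assms(2)] by auto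
  have e: "(-w)^(2*L+i+j) = w^(2*L) * (-w)^i * (-w)^j" "(16::complex)^(2*L+i+j) = 2^(8*L) * 16^i * 16^j"
    by (simp_all add: power_add power_mult)
  show ?thesis
    unfolding TT_def cf_def Rc_def tm_eq[OF assms(1)] tm_eq[OF assms(2)] prod.case e using nz
    by (simp add: field_simps power2_eq_square)
qed

lemma vand_sym:
  assumes "a + b = N"
  shows "(\<Sum>L\<le>b. ((2*a) choose (a+L)) * ((2*b) choose (b+L)))
       + (\<Sum>L\<in>{1..a}. ((2*a) choose (a+L)) * ((2*b) choose (b+L))) = (2*N) choose N"
proof -
  define g where "g m = ((2*a) choose m) * ((2*b) choose (N-m))" for m
  have ab: "2*a+2*b = 2*N" using assms by simp
  have "(2*N) choose N = (\<Sum>m\<le>N. g m)"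
    using vandermonde[of "2*a" "2*b" N] unfolding g_def ab by simp
  also have "{..N} = {..<a} \<union> {a..N}" using assms by auto
  also have "sum g ({..<a} \<union> {a..N}) = sum g {..<a} + sum g {a..N}"
    by (rule sum.union_disjoint) auto
  also have "sum g {a..N} = (\<Sum>L\<le>b. ((2*a) choose (a+L)) * ((2*b) choose (b+L)))"
  proof (rule sym, rule sum.reindex_bij_witness[of _ "\<lambda>m. m-a" "\<lambda>L. a+L"])
    fix L assume L: "L \<in> {..b}"
    show "a + L - a = L" by simp
    show "a + L \<in> {a..N}" using L assms by auto
    have "(2*b) choose (N - (a+L)) = (2*b) choose (2*b - (N - (a+L)))"
      using L assms by (intro binomial_symmetric) auto
    also have "2*b - (N - (a+L)) = b + L" using L assms by auto
    finally show "g (a+L) = ((2*a) choose (a+L)) * ((2*b) choose (b+L))"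
      unfolding g_def using assms by simp
  qed (use assms in auto)
  also have "sum g {..<a} = (\<Sum>L\<in>{1..a}. ((2*a) choose (a+L)) * ((2*b) choose (b+L)))"
  proof (rule sym, rule sum.reindex_bij_witness[of _ "\<lambda>m. a-m" "\<lambda>L. a-L"])
    fix L assume L: "L \<in> {1..a}"
    show "a - (a - L) = L" using L by auto
    show "a - L \<in> {..<a}" using L by auto
    have "(2*a) choose (a - L) = (2*a) choose (2*a - (a - L))"
      using L by (intro binomial_symmetric) auto
    also have "2*a - (a - L) = a + L" using L by auto
    finally have c1: "(2*a) choose (a - L) = (2*a) choose (a + L)" .
    have c2: "N - (a - L) = b + L" using L assms by auto
    show "g (a-L) = ((2*a) choose (a+L)) * ((2*b) choose (b+L))"
      unfolding g_def c1 c2 ..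
  qed (use assms in auto)
  finally show ?thesis by simp
qed

lemma vand2:
  assumes "a + b = N"
  shows "(\<Sum>L\<le>min a b. (if L = 0 then 1 else 2) * (((2*a) choose (a+L)) * ((2*b) choose (b+L)))) = (2*N) choose N"
proof -
  define f where "f L = ((2*a) choose (a+L)) * ((2*b) choose (b+L))" for L
  have z: "f L = 0" if "L > min a b" for L
    using that unfolding f_def by auto
  have s1: "(\<Sum>L\<le>b. f L) = (\<Sum>L\<le>min a b. f L)"
    by (rule sum.mono_neutral_right) (auto intro!: z)
  have s2: "(\<Sum>L\<in>{1..a}. f L) = (\<Sum>L\<in>{1..min a b}. f L)"
    by (rule sum.mono_neutral_right) (auto intro!: z)
  have "(\<Sum>L\<le>min a b. (if L = 0 then 1 else 2) * f L) = (\<Sum>L\<le>min a b. f L) + (\<Sum>L\<in>{1..min a b}. f L)"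
  proof -
    have "(\<Sum>L\<le>min a b. (if L = 0 then 1 else 2) * f L) = (\<Sum>L\<le>min a b. f L + (if L = 0 then 0 else f L))"
      by (intro sum.cong) auto
    also have "\<dots> = (\<Sum>L\<le>min a b. f L) + (\<Sum>L\<le>min a b. (if L = 0 then 0 else f L))"
      by (rule sum.distrib)
    also have "(\<Sum>L\<le>min a b. (if L = 0 then 0 else f L)) = (\<Sum>L\<in>{1..min a b}. f L)"
      by (rule sum.mono_neutral_cong_right) auto
    finally show ?thesis .
  qed
  also have "\<dots> = (2*N) choose N"
    using vand_sym[OF assms] s1 s2 unfolding f_def by simp
  finally show ?thesis unfolding f_def .
qed

lemma poch_vand:
  fixes \<mu> \<nu> :: complex
  shows "(\<Sum>a\<le>N. of_nat (N choose a) * pochhammer (\<mu>+1 + of_nat a) (N-a) * pochhammer (\<nu>+1 + of_nat (N-a)) a)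
     = pochhammer (\<mu>+\<nu> + of_nat N+1) N"
proof -
  have "pochhammer (- (\<nu> + of_nat N) + - (\<mu> + of_nat N)) N
      = (\<Sum>k\<le>N. of_nat (N choose k) * pochhammer (- (\<nu> + of_nat N)) k * pochhammer (- (\<mu> + of_nat N)) (N - k))"
    by (rule pochhammer_binomial_sum)
  also have "\<dots> = (\<Sum>k\<le>N. (-1)^N * (of_nat (N choose k) * pochhammer (\<mu>+1 + of_nat k) (N-k) * pochhammer (\<nu>+1 + of_nat (N-k)) k))"
  proof (intro sum.cong refl)
    fix k assume k: "k \<in> {..N}"
    have e1: "pochhammer (- (\<nu> + of_nat N)) k = (-1)^k * pochhammer (\<nu>+1 + of_nat (N-k)) k"
    proof -
      have "\<nu> + of_nat N - of_nat k + 1 = \<nu>+1 + of_nat (N-k)" using k by (simp add: of_nat_diff)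
      thus ?thesis using pochhammer_minus[of "\<nu> + of_nat N" k] by (simp only:)
    qed
    have e2: "pochhammer (- (\<mu> + of_nat N)) (N-k) = (-1)^(N-k) * pochhammer (\<mu>+1 + of_nat k) (N-k)"
    proof -
      have "\<mu> + of_nat N - of_nat (N-k) + 1 = \<mu>+1 + of_nat k" using k by (simp add: of_nat_diff)
      thus ?thesis using pochhammer_minus[of "\<mu> + of_nat N" "N-k"] by (simp only:)
    qed
    have e3: "(-1::complex)^k * (-1)^(N-k) = (-1)^N"
      using k by (simp flip: power_add)
    show "of_nat (N choose k) * pochhammer (- (\<nu> + of_nat N)) k * pochhammer (- (\<mu> + of_nat N)) (N - k)
        = (-1)^N * (of_nat (N choose k) * pochhammer (\<mu>+1 + of_nat k) (N-k) * pochhammer (\<nu>+1 + of_nat (N-k)) k)"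
      unfolding e1 e2 e3[symmetric] by (simp add: algebra_simps)
  qed
  also have "\<dots> = (-1)^N * (\<Sum>a\<le>N. of_nat (N choose a) * pochhammer (\<mu>+1 + of_nat a) (N-a) * pochhammer (\<nu>+1 + of_nat (N-a)) a)"
    by (simp add: sum_distrib_left)
  finally have *: "pochhammer (- (\<mu>+\<nu>+2* of_nat N)) N = (-1)^N * (\<Sum>a\<le>N. of_nat (N choose a) * pochhammer (\<mu>+1 + of_nat a) (N-a) * pochhammer (\<nu>+1 + of_nat (N-a)) a)"
    by (simp add: algebra_simps)
  have "pochhammer (- (\<mu>+\<nu>+2* of_nat N)) N = (-1)^N * pochhammer (\<mu>+\<nu> + of_nat N+1) N"
  proof -
    have "\<mu>+\<nu>+2* of_nat N - of_nat N + 1 = \<mu>+\<nu> + of_nat N+1" by simp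
    thus ?thesis using pochhammer_minus[of "\<mu>+\<nu>+2* of_nat N" N] by (simp only:)
  qed
  with * have "(-1)^N * (\<Sum>a\<le>N. of_nat (N choose a) * pochhammer (\<mu>+1 + of_nat a) (N-a) * pochhammer (\<nu>+1 + of_nat (N-a)) a)
     = (-1)^N * pochhammer (\<mu>+\<nu> + of_nat N+1) N" by simp
  thus ?thesis by simp
qed

definition SN :: "nat \<Rightarrow> (nat \<times> nat \<times> nat) set" where
  "SN N = {(L,i,j). 2*L+i+j = N}"

definition lt :: "complex \<Rightarrow> complex \<Rightarrow> complex \<Rightarrow> nat \<Rightarrow> complex" where
  "lt \<mu> \<nu> w n = pochhammer (1/2) n * pochhammer (\<mu>/2+\<nu>/2+1/2) n * pochhammer (\<mu>/2+\<nu>/2+1) n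
     / (pochhammer 1 n * pochhammer (\<mu>+1) n * pochhammer (\<nu>+1) n * pochhammer (\<mu>+\<nu>+1) n) * (-w)^n / fact n"

lemma lt_eq:
  assumes "\<mu> + 1 \<notin> \<int>\<^sub>\<le>\<^sub>0" "\<nu> + 1 \<notin> \<int>\<^sub>\<le>\<^sub>0" "\<mu> + \<nu> + 1 \<notin> \<int>\<^sub>\<le>\<^sub>0"
  shows "lt \<mu> \<nu> w N = (-w)^N / 16^N * of_nat ((2*N) choose N) * pochhammer (\<mu>+\<nu> + of_nat N+1) N
     / (fact N * pochhammer (\<mu>+1) N * pochhammer (\<nu>+1) N)"
proof -
  have d: "pochhammer (2 * (\<mu>/2+\<nu>/2+1/2)) (2*N) = of_nat (2^(2*N)) * pochhammer (\<mu>/2+\<nu>/2+1/2) N * pochhammer (\<mu>/2+\<nu>/2+1/2+1/2) N"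
    by (rule pochhammer_double)
  have e1: "\<mu>/2+\<nu>/2+1/2+1/2 = \<mu>/2+\<nu>/2+1" "2 * (\<mu>/2+\<nu>/2+1/2) = \<mu>+\<nu>+1"
    by (simp_all add: field_simps)
  have d2: "pochhammer (\<mu>/2+\<nu>/2+1/2) N * pochhammer (\<mu>/2+\<nu>/2+1) N = pochhammer (\<mu>+\<nu>+1) (2*N) / 4^N"
  proof -
    have f: "of_nat (2^(2*N)) = (4::complex)^N" by (simp add: power_mult)
    have d': "pochhammer (\<mu>+\<nu>+1) (2*N) = 4^N * (pochhammer (\<mu>/2+\<nu>/2+1/2) N * pochhammer (\<mu>/2+\<nu>/2+1) N)"
      using d unfolding e1 f by (simp only: mult.assoc)
    show ?thesis by (subst d') simp
  qed
  have p2: "pochhammer (\<mu>+\<nu>+1) (2*N) = pochhammer (\<mu>+\<nu>+1) N * pochhammer (\<mu>+\<nu> + of_nat N+1) N"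
    using pochhammer_product'[of "\<mu>+\<nu>+1" N N] by (simp add: mult_2 add_ac)
  have c: "(of_nat ((2*N) choose N) :: complex) = fact (2*N) / (fact N * fact N)"
    by (subst binomial_fact) (auto simp: mult_2)
  have nz: "pochhammer (\<mu>+1) N \<noteq> 0" "pochhammer (\<nu>+1) N \<noteq> 0" "pochhammer (\<mu>+\<nu>+1) N \<noteq> 0"
    using poch_nz[OF assms(1)] poch_nz[OF assms(2)] poch_nz[OF assms(3)] by auto
  have s16: "(16::complex)^N = 4^N * 4^N" by (simp flip: power_mult_distrib)
  have "lt \<mu> \<nu> w N = pochhammer (1/2) N * (pochhammer (\<mu>/2+\<nu>/2+1/2) N * pochhammer (\<mu>/2+\<nu>/2+1) N)
     / (pochhammer 1 N * pochhammer (\<mu>+1) N * pochhammer (\<nu>+1) N * pochhammer (\<mu>+\<nu>+1) N) * (-w)^N / fact N"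
    unfolding lt_def by (simp add: mult.assoc)
  also have "\<dots> = (-w)^N / 16^N * of_nat ((2*N) choose N) * pochhammer (\<mu>+\<nu> + of_nat N+1) N
     / (fact N * pochhammer (\<mu>+1) N * pochhammer (\<nu>+1) N)"
    unfolding d2 p2 c poch_half s16 using nz by (simp add: pochhammer_fact[symmetric] field_simps)
  finally show ?thesis .
qed

lemma finite_SN: "finite (SN N)"
proof -
  have "SN N \<subseteq> {..N} \<times> {..N} \<times> {..N}" unfolding SN_def by auto
  thus ?thesis by (rule finite_subset) auto
qed

lemma sum_SN:
  assumes "\<mu> + 1 \<notin> \<int>\<^sub>\<le>\<^sub>0" "\<nu> + 1 \<notin> \<int>\<^sub>\<le>\<^sub>0" "\<mu> + \<nu> + 1 \<notin> \<int>\<^sub>\<le>\<^sub>0"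
  shows "sum (cf \<mu> \<nu> w) (SN N) = lt \<mu> \<nu> w N"
proof -
  define K where "K = (-w)^N / (16::complex)^N"
  have "sum (cf \<mu> \<nu> w) (SN N) = sum (\<lambda>(a,L). cf \<mu> \<nu> w (L, a-L, N-a-L)) (Sigma {..N} (\<lambda>a. {..min a (N-a)}))"
    by (rule sum.reindex_bij_witness[of _ "\<lambda>(a,L). (L, a-L, N-a-L)" "\<lambda>(L,i,j). (L+i, L)"]) (auto simp: SN_def)
  also have "\<dots> = (\<Sum>a\<le>N. \<Sum>L\<le>min a (N-a). cf \<mu> \<nu> w (L, a-L, N-a-L))"
    by (rule sum.Sigma[symmetric]) auto
  also have "\<dots> = (\<Sum>a\<le>N. K * of_nat ((2*N) choose N) / (fact a * fact (N-a) * pochhammer (\<mu>+1) a * pochhammer (\<nu>+1) (N-a)))"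
  proof (rule sum.cong[OF refl])
    fix a assume a: "a \<in> {..N}"
    define b where "b = N - a"
    have ab: "a + b = N" using a unfolding b_def by auto
    define D where "D = fact a * fact b * pochhammer (\<mu>+1) a * pochhammer (\<nu>+1) b"
    have "(\<Sum>L\<le>min a b. cf \<mu> \<nu> w (L, a-L, N-a-L))
        = (\<Sum>L\<le>min a b. K * of_nat ((if L = 0 then 1 else 2) * (((2*a) choose (a+L)) * ((2*b) choose (b+L)))) / D)"
    proof (rule sum.cong[OF refl])
      fix L assume L: "L \<in> {..min a b}"
      have e: "2*L+(a-L)+(N-a-L) = N" "L+(a-L) = a" "2*L+(a-L) = a+L" "L+(N-a-L) = b" "2*L+(N-a-L) = b+L"
        using L ab unfolding b_def by auto
      have k: "(2 - kdelta L 0) = (of_nat (if L = 0 then 1 else 2) :: complex)"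
        by (simp add: kdelta_def)
      show "cf \<mu> \<nu> w (L, a-L, N-a-L) = K * of_nat ((if L = 0 then 1 else 2) * (((2*a) choose (a+L)) * ((2*b) choose (b+L)))) / D"
      proof -
        have "a + (N-a) = N" "a + L + (N-(a+L)) = N" using L ab a unfolding b_def by auto
        thus ?thesis unfolding cf_def prod.case e k K_def D_def by simp
      qed
    qed
    also have "\<dots> = K * of_nat (\<Sum>L\<le>min a b. (if L = 0 then 1 else 2) * (((2*a) choose (a+L)) * ((2*b) choose (b+L)))) / D"
      by (simp add: sum_divide_distrib sum_distrib_left)
    also have "\<dots> = K * of_nat ((2*N) choose N) / D"
      by (simp only: vand2[OF ab])
    finally show "(\<Sum>L\<le>min a (N-a). cf \<mu> \<nu> w (L, a-L, N-a-L))
        = K * of_nat ((2*N) choose N) / (fact a * fact (N-a) * pochhammer (\<mu>+1) a * pochhammer (\<nu>+1) (N-a))"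
      unfolding D_def b_def .
  qed
  also have "\<dots> = (\<Sum>a\<le>N. K * of_nat ((2*N) choose N) / (fact N * pochhammer (\<mu>+1) N * pochhammer (\<nu>+1) N)
       * (of_nat (N choose a) * pochhammer (\<mu>+1 + of_nat a) (N-a) * pochhammer (\<nu>+1 + of_nat (N-a)) a))"
  proof (rule sum.cong[OF refl])
    fix a assume a: "a \<in> {..N}"
    have p1: "pochhammer (\<mu>+1) N = pochhammer (\<mu>+1) a * pochhammer (\<mu>+1 + of_nat a) (N-a)"
      using a by (intro pochhammer_product) auto
    have p2: "pochhammer (\<nu>+1) N = pochhammer (\<nu>+1) (N-a) * pochhammer (\<nu>+1 + of_nat (N-a)) a"
      using a by (subst pochhammer_product[of "N-a"]) auto
    have c: "(of_nat (N choose a) :: complex) = fact N / (fact a * fact (N-a))"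
      using a by (subst binomial_fact) auto
    have nz: "pochhammer (\<mu>+1) a \<noteq> 0" "pochhammer (\<nu>+1) (N-a) \<noteq> 0"
       "pochhammer (\<mu>+1 + of_nat a) (N-a) \<noteq> 0" "pochhammer (\<nu>+1 + of_nat (N-a)) a \<noteq> 0"
      using poch_nz[OF assms(1), of N] poch_nz[OF assms(2), of N] unfolding p1 p2 by auto
    show "K * of_nat ((2*N) choose N) / (fact a * fact (N-a) * pochhammer (\<mu>+1) a * pochhammer (\<nu>+1) (N-a))
       = K * of_nat ((2*N) choose N) / (fact N * pochhammer (\<mu>+1) N * pochhammer (\<nu>+1) N)
       * (of_nat (N choose a) * pochhammer (\<mu>+1 + of_nat a) (N-a) * pochhammer (\<nu>+1 + of_nat (N-a)) a)"
      unfolding p1 p2 c using nz by (simp add: field_simps)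
  qed
  also have "\<dots> = K * of_nat ((2*N) choose N) / (fact N * pochhammer (\<mu>+1) N * pochhammer (\<nu>+1) N)
       * pochhammer (\<mu>+\<nu> + of_nat N+1) N"
    by (simp only: sum_distrib_left[symmetric] poch_vand)
  also have "\<dots> = lt \<mu> \<nu> w N"
    unfolding lt_eq[OF assms] K_def by simp
  finally show ?thesis .
qed


lemma poch_bound:
  fixes c :: complex assumes c: "c \<notin> \<int>\<^sub>\<le>\<^sub>0"
  shows "\<exists>C. \<forall>n. norm (1 / pochhammer c n) \<le> C * 2^n / fact n"
proof -
  define g where "g n = norm (fact n / (2^n * pochhammer c n))" for n
  define N0 where "N0 = nat \<lceil>2 * norm c\<rceil> + 1"
  define C where "C = Max (g ` {..N0})"
  have stepg: "g (Suc n) \<le> g n" if "n \<ge> N0" for n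
  proof -
    have nz: "pochhammer c n \<noteq> 0" "c + of_nat n \<noteq> 0"
      using poch_nz[OF c, of n] poch_nz[OF c, of "Suc n"] by (auto simp: pochhammer_Suc)
    have geq1: "g (Suc n) = g n * ((real n + 1) / (2 * norm (c + of_nat n)))"
    proof -
      have "fact (Suc n) / (2^(Suc n) * pochhammer c (Suc n)) =
          (fact n / (2^n * pochhammer c n)) * ((of_nat n + 1) / (2 * (c + of_nat n)) :: complex)"
        using nz by (simp add: pochhammer_Suc field_simps)
      hence "g (Suc n) = g n * norm ((of_nat n + 1) / (2 * (c + of_nat n)) :: complex)"
        unfolding g_def by (simp only: norm_mult)
      also have "norm ((of_nat n + 1) / (2 * (c + of_nat n)) :: complex) = (real n + 1) / (2 * norm (c + of_nat n))"
      proof -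
        have e1: "(of_nat n + 1 :: complex) = of_nat (Suc n)" by simp
        show ?thesis unfolding e1 norm_divide norm_mult norm_of_nat by simp
      qed
      finally show ?thesis .
    qed
    have le1: "real n + 1 \<le> 2 * norm (c + of_nat n)"
    proof -
      have "norm (of_nat n :: complex) \<le> norm (c + of_nat n) + norm c"
        using norm_triangle_ineq4[of "c + of_nat n" c] by simp
      moreover have "real n \<ge> 2 * norm c + 1" using that unfolding N0_def by linarith
      ultimately show ?thesis by simp
    qed
    have "norm (c + of_nat n) > 0" using nz by simp
    hence "(real n + 1) / (2 * norm (c + of_nat n)) \<le> 1" using le1 by simp
    moreover have "g n \<ge> 0" unfolding g_def by simp
    ultimately show ?thesis unfolding geq1 by (metis mult_left_le times_divide_eq_right)
  qed
  have gC: "g n \<le> C" for n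
  proof (cases "n \<le> N0")
    case True thus ?thesis unfolding C_def by (intro Max_ge) auto
  next
    case False
    hence "N0 \<le> n" by simp
    thus ?thesis
    proof (induction n rule: dec_induct)
      case base thus ?case unfolding C_def by (intro Max_ge) auto
    next
      case (step m) thus ?case using \<open>N0 \<le> m\<close> using stepg[of m] step.hyps step.IH by linarith 
    qed
  qed
  have geq: "norm (1 / pochhammer c n) = g n * 2^n / fact n" for n
    unfolding g_def using poch_nz[OF c, of n] by (simp add: norm_divide norm_mult norm_power)
  have "norm (1 / pochhammer c n) \<le> C * 2^n / fact n" for n
  proof -
    have "g n * 2^n / fact n \<le> C * 2^n / fact n" using gC[of n]
      by (intro divide_right_mono mult_right_mono) auto
    thus ?thesis using geq[of n] by simp
  qed
  thus ?thesis by (intro exI[of _ C] allI)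
qed


lemma fact_sq_ge: "(fact L * fact i :: real) \<le> fact (L+i) * fact (L+i)"
  by (intro mult_mono fact_mono) auto

lemma tm_bound:
  assumes mu: "\<mu> + 1 \<notin> \<int>\<^sub>\<le>\<^sub>0" and C: "\<And>n. norm (1 / pochhammer (\<mu>+1) n) \<le> C * 2^n / fact n"
  shows "norm (tm \<mu> w L i) \<le> C * 8^L * norm (pochhammer (\<mu>+1) L) * ((norm w / 2)^i / fact i)"
proof -
  define Cb where "Cb = real ((2*(L+i)) choose (2*L+i))"
  define P where "P = norm (pochhammer (\<mu>+1) L)"
  define F where "F = (fact (L+i) :: real)"
  define q where "q = norm (1 / pochhammer (\<mu>+1) (L+i))"
  define A where "A = Cb * fact L * P * norm w ^ i / (16^i * F)"
  have F0: "F > 0" unfolding F_def by simp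
  have A0: "A \<ge> 0" unfolding A_def Cb_def P_def F_def by simp
  have "norm (tm \<mu> w L i) = A * q"
    unfolding tm_eq[OF mu] A_def q_def Cb_def P_def F_def
    by (simp add: norm_mult norm_divide norm_power)
  also have "\<dots> \<le> A * (C * 2^(L+i) / F)"
    using C[of "L+i"] A0 unfolding q_def F_def by (intro mult_left_mono) auto
  also have "\<dots> \<le> (4^(L+i) * fact L * P * norm w ^ i / (16^i * F)) * (C * 2^(L+i) / F)"
  proof (rule mult_right_mono)
    have "Cb \<le> 2^(2*(L+i))" unfolding Cb_def
      by (metis binomial_le_pow2 numeral_power_eq_of_nat_cancel_iff of_nat_le_iff)
    moreover have "(2::real)^(2*(L+i)) = 4^(L+i)" by (metis power_mult power2_eq_square num_double numeral_times_numeral)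
    ultimately have "Cb \<le> 4^(L+i)" by simp
    thus "A \<le> 4^(L+i) * fact L * P * norm w ^ i / (16^i * F)"
      unfolding A_def using F0 unfolding P_def
      by (intro divide_right_mono mult_right_mono) auto
    show "0 \<le> C * 2^(L+i) / F"
      using C[of 0] F0 by simp
  qed
  also have "\<dots> = C * 8^L * P * (norm w / 2)^i * (fact L / (F * F))"
  proof -
    have "(4::real)^(L+i) * 2^(L+i) = 8^(L+i)" by (simp flip: power_mult_distrib)
    hence "(4::real)^(L+i) * 2^(L+i) = 8^L * 8^i" by (simp add: power_add)
    moreover have "(16::real)^i = 8^i * 2^i" by (simp flip: power_mult_distrib)
    ultimately show ?thesis using F0 by (simp add: field_simps power_divide)
  qed
  also have "\<dots> \<le> C * 8^L * P * (norm w / 2)^i * (1 / fact i)"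
  proof (rule mult_left_mono)
    show "fact L / (F * F) \<le> 1 / fact i"
      using fact_sq_ge[of L i] F0 unfolding F_def by (simp add: field_simps)
    show "0 \<le> C * 8^L * P * (norm w / 2)^i"
      using C[of 0] unfolding P_def by simp
  qed
  finally show ?thesis unfolding P_def by simp
qed

lemma TT_bound:
  assumes mu: "\<mu> + 1 \<notin> \<int>\<^sub>\<le>\<^sub>0" and Cm: "\<And>n. norm (1 / pochhammer (\<mu>+1) n) \<le> Cm * 2^n / fact n"
  assumes nu: "\<nu> + 1 \<notin> \<int>\<^sub>\<le>\<^sub>0" and Cn: "\<And>n. norm (1 / pochhammer (\<nu>+1) n) \<le> Cn * 2^n / fact n"
  shows "norm (TT \<mu> \<nu> w (L,i,j)) \<le> 2 * Cm * Cn * (((norm w)^2/4)^L / fact L) * (((norm w / 2)^i / fact i) * ((norm w / 2)^j / fact j))"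
proof -
  define Pm where "Pm = norm (pochhammer (\<mu>+1) L)"
  define Pn where "Pn = norm (pochhammer (\<nu>+1) L)"
  define ei where "ei = (norm w / 2)^i / fact i"
  define ej where "ej = (norm w / 2)^j / fact j"
  define d where "d = norm (2 - kdelta L 0)"
  have Pm0: "Pm > 0" unfolding Pm_def using poch_nz[OF mu] by simp
  have Pn0: "Pn > 0" unfolding Pn_def using poch_nz[OF nu] by simp
  have Cm0: "Cm \<ge> 0" using Cm[of 0] by simp
  have Cn0: "Cn \<ge> 0" using Cn[of 0] by simp
  have d2: "d \<le> 2" "d \<ge> 0" unfolding d_def kdelta_def by auto
  have nR: "norm (Rc \<mu> \<nu> w L) = d * norm w^(2*L) / (2^(8*L) * (fact L)^2 * Pm * Pn)"
    unfolding Rc_def d_def Pm_def Pn_def by (simp add: norm_mult norm_divide norm_power)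
  have "norm (TT \<mu> \<nu> w (L,i,j)) = norm (Rc \<mu> \<nu> w L) * norm (tm \<mu> w L i) * norm (tm \<nu> w L j)"
    unfolding TT_def by (simp add: norm_mult)
  also have "\<dots> \<le> norm (Rc \<mu> \<nu> w L) * (Cm * 8^L * Pm * ei) * (Cn * 8^L * Pn * ej)"
    using tm_bound[OF mu Cm, of w L i] tm_bound[OF nu Cn, of w L j] Cm0 Cn0 Pm0 Pn0
    unfolding Pm_def Pn_def ei_def ej_def
    by (intro mult_mono) auto
  also have "\<dots> = d * Cm * Cn * (norm w^(2*L) * 64^L / (2^(8*L) * (fact L)^2)) * (ei * ej)"
  proof -
    have "(8::real)^L * 8^L = 64^L" by (simp flip: power_mult_distrib)
    thus ?thesis unfolding nR using Pm0 Pn0 by (simp add: field_simps)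
  qed
  also have "\<dots> \<le> 2 * Cm * Cn * (((norm w)^2/4)^L / fact L) * (ei * ej)"
  proof (intro mult_right_mono mult_mono)
    have "(2::real)^(8*L) = 64^L * 4^L" by (simp add: power_mult flip: power_mult_distrib)
    hence "norm w^(2*L) * 64^L / (2^(8*L) * (fact L)^2) = ((norm w)^2/4)^L / (fact L * fact L)"
      by (simp add: power_mult power_divide power2_eq_square field_simps)
    also have "\<dots> \<le> ((norm w)^2/4)^L / fact L"
      by (intro divide_left_mono) (auto simp: fact_ge_1)
    finally show "norm w^(2*L) * 64^L / (2^(8*L) * (fact L)^2) \<le> ((norm w)^2/4)^L / fact L" .
  qed (use d2 Cm0 Cn0 in \<open>auto simp: ei_def ej_def\<close>)
  finally show ?thesis unfolding ei_def ej_def .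
qed

lemma prod_summable_real:
  fixes p :: "'a \<Rightarrow> real" and q :: "'b \<Rightarrow> real"
  assumes "p summable_on UNIV" "q summable_on UNIV" "\<And>x. p x \<ge> 0" "\<And>y. q y \<ge> 0"
  shows "(\<lambda>(x,y). p x * q y) summable_on UNIV"
proof -
  have "(\<lambda>(x,y). p x * q y) summable_on Sigma UNIV (\<lambda>_. UNIV)"
  proof (rule summable_on_SigmaI[where g = "\<lambda>x. p x * infsum q UNIV"])
    show "((\<lambda>y. case (x, y) of (x, y) \<Rightarrow> p x * q y) has_sum p x * infsum q UNIV) UNIV" for x
      using has_sum_cmult_right[OF has_sum_infsum[OF assms(2)], of "p x"] by simp
    show "(\<lambda>x. p x * infsum q UNIV) summable_on UNIV"
      by (rule summable_on_cmult_left[OF assms(1)])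
  qed (use assms in \<open>auto intro: mult_nonneg_nonneg\<close>)
  thus ?thesis by simp
qed

lemma exp_summable_on: "(x::real) \<ge> 0 \<Longrightarrow> (\<lambda>n. x^n / fact n) summable_on UNIV"
proof -
  assume x: "x \<ge> 0"
  have "summable (\<lambda>n. x^n / fact n)"
    using summable_exp[of x] by (simp add: field_simps)
  thus ?thesis using x by (subst summable_on_UNIV_nonneg_real_iff) auto
qed

lemma TT_summable:
  assumes mu: "\<mu> + 1 \<notin> \<int>\<^sub>\<le>\<^sub>0" and nu: "\<nu> + 1 \<notin> \<int>\<^sub>\<le>\<^sub>0"
  shows "TT \<mu> \<nu> w summable_on UNIV"
proof -
  obtain Cm where Cm: "\<And>n. norm (1 / pochhammer (\<mu>+1) n) \<le> Cm * 2^n / fact n"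
    using poch_bound[OF mu] by blast
  obtain Cn where Cn: "\<And>n. norm (1 / pochhammer (\<nu>+1) n) \<le> Cn * 2^n / fact n"
    using poch_bound[OF nu] by blast
  have Cm0: "Cm \<ge> 0" using Cm[of 0] by simp
  have Cn0: "Cn \<ge> 0" using Cn[of 0] by simp
  define A where "A L = ((norm w)^2/4)^L / fact L" for L
  define e where "e i = (norm w / 2)^i / fact i" for i
  have A0: "A L \<ge> 0" for L unfolding A_def by simp
  have e0: "e i \<ge> 0" for i unfolding e_def by simp
  have sA: "A summable_on UNIV" unfolding A_def by (rule exp_summable_on) simp
  have se: "e summable_on UNIV" unfolding e_def by (rule exp_summable_on) simp
  have s1: "(\<lambda>(i,j). e i * e j) summable_on UNIV"
    by (rule prod_summable_real[OF se se e0 e0])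
  have s2: "(\<lambda>(L,ij). A L * (case ij of (i,j) \<Rightarrow> e i * e j)) summable_on UNIV"
    using prod_summable_real[OF sA s1 A0] e0 by (simp add: case_prod_unfold)
  define g where "g p = 2 * Cm * Cn * (case p of (L,ij) \<Rightarrow> A L * (case ij of (i,j) \<Rightarrow> e i * e j))" for p
  have sg: "g summable_on UNIV"
    unfolding g_def by (rule summable_on_cmult_right[OF s2])
  have "(\<lambda>p. norm (TT \<mu> \<nu> w p)) summable_on UNIV"
  proof (rule summable_on_comparison_test[OF sg])
    fix p :: "nat \<times> nat \<times> nat"
    obtain L i j where p: "p = (L,i,j)" by (cases p) auto
    show "norm (TT \<mu> \<nu> w p) \<le> g p"
      using TT_bound[OF mu Cm nu Cn, of w L i j] unfolding p g_def A_def e_def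
      by (simp add: mult.assoc mult_ac)
  qed simp
  thus ?thesis by (simp add: summable_on_iff_abs_summable_on_complex)
qed


lemma tm_summable:
  assumes mu: "\<mu> + 1 \<notin> \<int>\<^sub>\<le>\<^sub>0"
  shows "tm \<mu> w L summable_on UNIV"
proof -
  obtain Cm where Cm: "\<And>n. norm (1 / pochhammer (\<mu>+1) n) \<le> Cm * 2^n / fact n"
    using poch_bound[OF mu] by blast
  have "(\<lambda>i. Cm * 8^L * norm (pochhammer (\<mu>+1) L) * ((norm w / 2)^i / fact i)) summable_on UNIV"
    by (rule summable_on_cmult_right, rule exp_summable_on) simp
  hence "(\<lambda>i. norm (tm \<mu> w L i)) summable_on UNIV"
    by (rule summable_on_comparison_test) (use tm_bound[OF mu Cm] in auto)
  thus ?thesis by (simp add: summable_on_iff_abs_summable_on_complex)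
qed

lemma hyp_tm:
  "hypergeom [of_nat L + 1/2] [2 * of_nat L + 1, of_nat L + \<mu> + 1] (- w / 4) = suminf (tm \<mu> w L)"
  unfolding hypergeom_def tm_def by simp

lemma suminf_infsum:
  fixes f :: "nat \<Rightarrow> complex"
  assumes "f summable_on UNIV" shows "suminf f = infsum f UNIV"
  using has_sum_imp_sums[OF has_sum_infsum[OF assms]] by (rule sums_unique[symmetric])

lemma per_L:
  assumes mu: "\<mu> + 1 \<notin> \<int>\<^sub>\<le>\<^sub>0" and nu: "\<nu> + 1 \<notin> \<int>\<^sub>\<le>\<^sub>0"
  shows "((\<lambda>ij. TT \<mu> \<nu> w (L, ij)) has_sum (Rc \<mu> \<nu> w L * suminf (tm \<mu> w L) * suminf (tm \<nu> w L))) UNIV"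
proof -
  define H1 where "H1 = suminf (tm \<mu> w L)"
  define H2 where "H2 = suminf (tm \<nu> w L)"
  have h1: "(tm \<mu> w L has_sum H1) UNIV"
    unfolding H1_def suminf_infsum[OF tm_summable[OF mu]] using tm_summable[OF mu] by simp
  have h2: "(tm \<nu> w L has_sum H2) UNIV"
    unfolding H2_def suminf_infsum[OF tm_summable[OF nu]] using tm_summable[OF nu] by simp
  have sT: "(\<lambda>(x, y). TT \<mu> \<nu> w (x, y)) summable_on Sigma UNIV (\<lambda>_. UNIV)"
    using TT_summable[OF mu nu, of w] by (simp add: case_prod_unfold)
  have s: "(\<lambda>ij. TT \<mu> \<nu> w (L, ij)) summable_on UNIV"
    using summable_on_SigmaD1[OF sT, of L] by simp
  have s': "(\<lambda>ij. TT \<mu> \<nu> w (L, ij)) summable_on Sigma UNIV (\<lambda>_. UNIV)"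
    using s by simp
  have "((\<lambda>ij. TT \<mu> \<nu> w (L, ij)) has_sum (Rc \<mu> \<nu> w L * H1 * H2)) (Sigma UNIV (\<lambda>_. UNIV))"
  proof (rule has_sum_SigmaI[OF _ _ s'])
    fix i :: nat
    show "((\<lambda>j. TT \<mu> \<nu> w (L, i, j)) has_sum (Rc \<mu> \<nu> w L * tm \<mu> w L i * H2)) UNIV"
      unfolding TT_def prod.case by (rule has_sum_cmult_right[OF h2])
  next
    show "((\<lambda>i. Rc \<mu> \<nu> w L * tm \<mu> w L i * H2) has_sum (Rc \<mu> \<nu> w L * H1 * H2)) UNIV"
      by (rule has_sum_cmult_left, rule has_sum_cmult_right[OF h1])
  qed
  thus ?thesis unfolding H1_def H2_def by simp
qed

lemma bij_snd_SN: "bij_betw snd (Sigma UNIV SN) UNIV"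
proof (rule bij_betwI[where g = "\<lambda>p. (case p of (L,i,j) \<Rightarrow> 2*L+i+j, p)"])
  show "snd \<in> Sigma UNIV SN \<rightarrow> UNIV" by simp
  show "(\<lambda>p. (case p of (L,i,j) \<Rightarrow> 2*L+i+j, p)) \<in> UNIV \<rightarrow> Sigma UNIV SN"
    by (auto simp: SN_def)
  show "(case snd x of (L,i,j) \<Rightarrow> 2*L+i+j, snd x) = x" if "x \<in> Sigma UNIV SN" for x
    using that by (auto simp: SN_def)
  show "snd (case y of (L,i,j) \<Rightarrow> 2*L+i+j, y) = y" for y by simp
qed

lemma lhs_has_sum:
  assumes mu: "\<mu> + 1 \<notin> \<int>\<^sub>\<le>\<^sub>0" and nu: "\<nu> + 1 \<notin> \<int>\<^sub>\<le>\<^sub>0" and mn: "\<mu> + \<nu> + 1 \<notin> \<int>\<^sub>\<le>\<^sub>0"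
  shows "(lt \<mu> \<nu> w has_sum infsum (TT \<mu> \<nu> w) UNIV) UNIV"
proof -
  define X where "X = infsum (TT \<mu> \<nu> w) UNIV"
  have hT: "(TT \<mu> \<nu> w has_sum X) UNIV"
    unfolding X_def using TT_summable[OF mu nu] by simp
  have "((\<lambda>x. TT \<mu> \<nu> w (snd x)) has_sum X) (Sigma UNIV SN)"
    using has_sum_reindex_bij_betw[OF bij_snd_SN, of "TT \<mu> \<nu> w" X] hT by simp
  hence "((\<lambda>N. sum (TT \<mu> \<nu> w) (SN N)) has_sum X) UNIV"
    by (rule has_sum_Sigma') (simp add: finite_SN)
  moreover have "sum (TT \<mu> \<nu> w) (SN N) = lt \<mu> \<nu> w N" for N
  proof -
    have "sum (TT \<mu> \<nu> w) (SN N) = sum (cf \<mu> \<nu> w) (SN N)"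
      by (rule sum.cong) (auto simp: TT_eq[OF mu nu])
    thus ?thesis using sum_SN[OF mu nu mn] by simp
  qed
  ultimately show ?thesis unfolding X_def by simp
qed

lemma rhs_has_sum:
  assumes mu: "\<mu> + 1 \<notin> \<int>\<^sub>\<le>\<^sub>0" and nu: "\<nu> + 1 \<notin> \<int>\<^sub>\<le>\<^sub>0"
  shows "((\<lambda>L. Rc \<mu> \<nu> w L * suminf (tm \<mu> w L) * suminf (tm \<nu> w L)) has_sum infsum (TT \<mu> \<nu> w) UNIV) UNIV"
proof -
  have "(TT \<mu> \<nu> w has_sum infsum (TT \<mu> \<nu> w) UNIV) (Sigma UNIV (\<lambda>_. UNIV))"
    using TT_summable[OF mu nu] by simp
  thus ?thesis
    by (rule has_sum_Sigma') (rule per_L[OF mu nu])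
qed


theorem theorem2:
  fixes k \<mu> \<nu> :: complex
  assumes "\<mu> + 1 \<notin> \<int>\<^sub>\<le>\<^sub>0" and "\<nu> + 1 \<notin> \<int>\<^sub>\<le>\<^sub>0" and "\<mu> + \<nu> + 1 \<notin> \<int>\<^sub>\<le>\<^sub>0"
  shows "hypergeom [1/2, \<mu>/2 + \<nu>/2 + 1/2, \<mu>/2 + \<nu>/2 + 1] [1, \<mu> + 1, \<nu> + 1, \<mu> + \<nu> + 1] (- (k^2))
    = 2 powr (\<mu> + \<nu>) * Gamma (\<mu> + 1) * Gamma (\<nu> + 1) *
      (\<Sum>L. ((-1) ^ (2*L) * k ^ (4*L) * 2 powr (- (8 * of_nat L) - \<mu> - \<nu>) * (2 - kdelta L 0))
             / ((fact L)^2 * Gamma (of_nat L + \<mu> + 1) * Gamma (of_nat L + \<nu> + 1))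
           * hypergeom [of_nat L + 1/2] [2 * of_nat L + 1, of_nat L + \<mu> + 1] (- (k^2) / 4)
           * hypergeom [of_nat L + 1/2] [2 * of_nat L + 1, of_nat L + \<nu> + 1] (- (k^2) / 4))"
proof -
  note mu = assms(1) and nu = assms(2) and mn = assms(3)
  define w where "w = k^2"
  define X where "X = infsum (TT \<mu> \<nu> w) UNIV"
  define c0 where "c0 = 2 powr (\<mu> + \<nu>) * Gamma (\<mu> + 1) * Gamma (\<nu> + 1)"
  define orig where "orig L = ((-1) ^ (2*L) * k ^ (4*L) * 2 powr (- (8 * of_nat L) - \<mu> - \<nu>) * (2 - kdelta L 0))
             / ((fact L)^2 * Gamma (of_nat L + \<mu> + 1) * Gamma (of_nat L + \<nu> + 1))
           * hypergeom [of_nat L + 1/2] [2 * of_nat L + 1, of_nat L + \<mu> + 1] (- (k^2) / 4)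
           * hypergeom [of_nat L + 1/2] [2 * of_nat L + 1, of_nat L + \<nu> + 1] (- (k^2) / 4)" for L
  have lhs: "hypergeom [1/2, \<mu>/2 + \<nu>/2 + 1/2, \<mu>/2 + \<nu>/2 + 1] [1, \<mu> + 1, \<nu> + 1, \<mu> + \<nu> + 1] (- (k^2))
      = suminf (lt \<mu> \<nu> w)"
    unfolding hypergeom_def lt_def w_def by (simp add: mult.assoc)
  have lX: "suminf (lt \<mu> \<nu> w) = X"
    using has_sum_imp_sums[OF lhs_has_sum[OF mu nu mn, of w]] unfolding X_def by (rule sums_unique[symmetric])
  have GmN: "Gamma (\<mu> + 1) \<noteq> 0" "Gamma (\<nu> + 1) \<noteq> 0"
    using mu nu by (simp_all add: Gamma_eq_zero_iff)
  have c0nz: "c0 \<noteq> 0" unfolding c0_def using GmN by simp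
  have eq: "c0 * orig L = Rc \<mu> \<nu> w L * suminf (tm \<mu> w L) * suminf (tm \<nu> w L)" for L
  proof -
    have g1: "Gamma (of_nat L + \<mu> + 1) = pochhammer (\<mu>+1) L * Gamma (\<mu>+1)"
      using pochhammer_Gamma[OF mu, of L] GmN by (simp add: add_ac field_simps)
    have g2: "Gamma (of_nat L + \<nu> + 1) = pochhammer (\<nu>+1) L * Gamma (\<nu>+1)"
      using pochhammer_Gamma[OF nu, of L] GmN by (simp add: add_ac field_simps)
    have p1: "2 powr (\<mu> + \<nu>) * 2 powr (- (8 * of_nat L) - \<mu> - \<nu>) = (1 / 2^(8*L) :: complex)"
    proof -
      have "2 powr (\<mu> + \<nu>) * 2 powr (- (8 * of_nat L) - \<mu> - \<nu>) = (2::complex) powr ((\<mu> + \<nu>) + (- (8 * of_nat L) - \<mu> - \<nu>))"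
        by (rule powr_add[symmetric])
      also have "(\<mu> + \<nu>) + (- (8 * of_nat L) - \<mu> - \<nu>) = - of_nat (8*L)" by simp
      also have "(2::complex) powr (- of_nat (8*L)) = 1 / 2^(8*L)"
      proof -
        have q: "(2::complex) powr of_nat (8*L) = 2^(8*L)" by (rule powr_nat') simp
        show ?thesis by (simp only: powr_minus_divide q)
      qed
      finally show ?thesis .
    qed
    have k1: "(-1::complex) ^ (2*L) = 1" by (simp add: power_mult)
    have k2: "k ^ (4*L) = w^(2*L)" unfolding w_def by (simp flip: power_mult)
    have h: "hypergeom [of_nat L + 1/2] [2 * of_nat L + 1, of_nat L + \<mu> + 1] (- (k^2) / 4) = suminf (tm \<mu> w L)"
            "hypergeom [of_nat L + 1/2] [2 * of_nat L + 1, of_nat L + \<nu> + 1] (- (k^2) / 4) = suminf (tm \<nu> w L)"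
      unfolding w_def by (rule hyp_tm)+
    have nz: "pochhammer (\<mu>+1) L \<noteq> 0" "pochhammer (\<nu>+1) L \<noteq> 0"
      using poch_nz[OF mu] poch_nz[OF nu] by auto
    have "c0 * orig L = (2 powr (\<mu> + \<nu>) * 2 powr (- (8 * of_nat L) - \<mu> - \<nu>)) * (Gamma (\<mu> + 1) * Gamma (\<nu> + 1))
        * ((-1) ^ (2*L) * k ^ (4*L) * (2 - kdelta L 0))
        / ((fact L)^2 * Gamma (of_nat L + \<mu> + 1) * Gamma (of_nat L + \<nu> + 1))
        * suminf (tm \<mu> w L) * suminf (tm \<nu> w L)"
      unfolding c0_def orig_def h by (simp add: field_simps)
    also have "\<dots> = Rc \<mu> \<nu> w L * suminf (tm \<mu> w L) * suminf (tm \<nu> w L)"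
      unfolding p1 k1 k2 g1 g2 Rc_def using GmN nz by (simp add: field_simps)
    finally show ?thesis .
  qed
  have "(\<lambda>L. c0 * orig L) sums X"
    using has_sum_imp_sums[OF rhs_has_sum[OF mu nu, of w]] unfolding X_def eq .
  hence "(\<lambda>L. inverse c0 * (c0 * orig L)) sums (inverse c0 * X)"
    by (rule sums_mult)
  hence "orig sums (inverse c0 * X)"
    using c0nz by (simp add: field_simps)
  hence "suminf orig = inverse c0 * X" by (rule sums_unique[symmetric])
  hence "c0 * suminf orig = X" using c0nz by simp
  thus ?thesis unfolding lhs lX c0_def orig_def by (rule sym)
qed

end
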